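(* Let $k\ge1$, $j\ge0$ be integers, and let $h$ have a continuous derivative of order $k+j$ on an interval $(a,b)$. Then for all $a<u<v<b$, \[ \int_u^v h^{(k+j)}(t)\,(t-u)^{k-1}(v-t)^{j}\,dt=(v-u)^{k+j}\,{}_jM_{k-1}(u,v). \]
   Context: For a function $h$ set $M(u,v)=\frac{h(v)-h(u)}{v-u}$ for $u\ne v$, and ${}_iM_j(u,v)=\frac{\partial^{i+j}}{\partial u^i\partial v^j}M(u,v)$ (partial derivatives $i$ times in $u$ and $j$ times in $v$). *)

theory Defs
  imports "HOL-Analysis.Analysis"
begin

definition nderiv :: "nat \<Rightarrow> (real \<Rightarrow> real) \<Rightarrow> real \<Rightarrow> real" where
  "nderiv n f = (deriv ^^ n) f"

definition C_n_on :: "nat \<Rightarrow> (real \<Rightarrow> real) \<Rightarrow> real set \<Rightarrow> bool" where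
  "C_n_on n h S \<longleftrightarrow>
     (\<forall>m<n. \<forall>t\<in>S. (nderiv m h has_real_derivative nderiv (Suc m) h t) (at t))
     \<and> continuous_on S (nderiv n h)"

definition Mdd :: "(real \<Rightarrow> real) \<Rightarrow> real \<Rightarrow> real \<Rightarrow> real" where
  "Mdd h u v = (h v - h u) / (v - u)"

text \<open>iMj(u,v): partial derivative i times in u and j times in v.\<close>
definition Mpartial :: "(real \<Rightarrow> real) \<Rightarrow> nat \<Rightarrow> nat \<Rightarrow> real \<Rightarrow> real \<Rightarrow> real" where
  "Mpartial h i j u v = nderiv i (\<lambda>x. nderiv j (\<lambda>y. Mdd h x y) v) u"

end

theory Submission
  imports Defs
begin

lemma nderiv_Suc: "nderiv (Suc m) f = deriv (nderiv m f)"
  by (simp add: nderiv_def)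

lemma nderiv_transfer:
  assumes S: "open S"
    and D: "\<And>m z. m < N \<Longrightarrow> z \<in> S \<Longrightarrow> (D m has_real_derivative D (Suc m) z) (at z)"
    and f: "\<And>z. z \<in> S \<Longrightarrow> f z = D 0 z"
  shows "m \<le> N \<Longrightarrow> z \<in> S \<Longrightarrow> nderiv m f z = D m z"
proof (induction m arbitrary: z)
  case 0
  then show ?case using f by (simp add: nderiv_def)
next
  case (Suc m)
  have "(nderiv m f has_real_derivative D (Suc m) z) (at z)"
    using has_field_derivative_transform_within_open[OF D[of m z] S \<open>z \<in> S\<close>, of "nderiv m f"]
      Suc by auto
  then show ?case by (simp add: nderiv_Suc DERIV_imp_deriv)
qed

lemma Cn_deriv:
  assumes "C_n_on n h S" "m < n" "t \<in> S"
  shows "(nderiv m h has_real_derivative nderiv (Suc m) h t) (at t)"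
  using assms unfolding C_n_on_def by blast

lemma Cn_cont:
  assumes "C_n_on n h S" "m \<le> n"
  shows "continuous_on S (nderiv m h)"
proof (cases "m = n")
  case True then show ?thesis using assms unfolding C_n_on_def by blast
next
  case False
  then have "m < n" using assms by simp
  then show ?thesis
    by (meson Cn_deriv DERIV_isCont assms(1) continuous_at_imp_continuous_on)
qed

lemma param_deriv:
  fixes c d w :: "real \<Rightarrow> real"
  assumes C: "C_n_on n h {a<..<b}" and r: "Suc r \<le> n"
    and w: "continuous_on {0..1} w" and c: "continuous_on {0..1} c" and d: "continuous_on {0..1} d"
    and inside: "\<And>s z. s \<in> {0..1} \<Longrightarrow> z \<in> {a<..<b} \<Longrightarrow> c s + d s * z \<in> {a<..<b}"
    and z0: "z0 \<in> {a<..<b}"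
  shows "((\<lambda>z. integral {0..1} (\<lambda>s. nderiv r h (c s + d s * z) * w s)) has_real_derivative
          integral {0..1} (\<lambda>s. nderiv (Suc r) h (c s + d s * z0) * (d s * w s))) (at z0)"
proof -
  have H0: "continuous_on {a<..<b} (nderiv r h)" using Cn_cont[OF C] r by simp
  have H1: "continuous_on {a<..<b} (nderiv (Suc r) h)" using Cn_cont[OF C r] .
  have "((\<lambda>z. integral (cbox 0 1) (\<lambda>s. nderiv r h (c s + d s * z) * w s)) has_real_derivative
          integral (cbox 0 1) (\<lambda>s. nderiv (Suc r) h (c s + d s * z0) * (d s * w s))) (at z0 within {a<..<b})"
  proof (rule leibniz_rule_field_derivative[where f="\<lambda>z s. nderiv r h (c s + d s * z) * w s"])
    fix z s assume z: "z \<in> {a<..<b}" and s: "s \<in> cbox (0::real) 1"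
    then have p: "c s + d s * z \<in> {a<..<b}" using inside by auto
    have "(nderiv r h has_real_derivative nderiv (Suc r) h (c s + d s * z)) (at (c s + d s * z))"
      using Cn_deriv[OF C _ p] r by simp
    moreover have "((\<lambda>z. c s + d s * z) has_real_derivative d s) (at z)"
    proof -
      have "((\<lambda>z. d s * z) has_real_derivative d s * 1) (at z)"
        by (rule DERIV_cmult[OF DERIV_ident])
      then have "((\<lambda>z. c s + d s * z) has_real_derivative 0 + d s * 1) (at z)"
        by (rule DERIV_add[OF DERIV_const])
      then show ?thesis by simp
    qed
    ultimately have "((\<lambda>z. nderiv r h (c s + d s * z)) has_real_derivative nderiv (Suc r) h (c s + d s * z) * d s) (at z)"
      by (rule DERIV_chain2)
    then have "((\<lambda>z. nderiv r h (c s + d s * z) * w s) has_real_derivative nderiv (Suc r) h (c s + d s * z) * d s * w s) (at z)"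
      by (rule DERIV_cmult_right)
    then show "((\<lambda>z. nderiv r h (c s + d s * z) * w s) has_real_derivative nderiv (Suc r) h (c s + d s * z) * (d s * w s)) (at z within {a<..<b})"
      by (simp add: has_field_derivative_at_within mult.assoc)
  next
    fix z assume z: "z \<in> {a<..<b}"
    have "continuous_on {0..1} (\<lambda>s. nderiv r h (c s + d s * z))"
    proof (rule continuous_on_compose2[OF H0])
      show "continuous_on {0..1} (\<lambda>s. c s + d s * z)"
        by (intro continuous_on_add continuous_on_mult c d continuous_on_const)
      show "(\<lambda>s. c s + d s * z) ` {0..1} \<subseteq> {a<..<b}" using inside z by blast
    qed
    then have "continuous_on {0..1} (\<lambda>s. nderiv r h (c s + d s * z) * w s)"
      by (intro continuous_on_mult w)
    then show "(\<lambda>s. nderiv r h (c s + d s * z) * w s) integrable_on cbox 0 1"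
      by (simp add: integrable_continuous_real)
  next
    have cs: "continuous_on ({a<..<b} \<times> {0..1}) (\<lambda>x. c (snd x))"
      by (rule continuous_on_compose2[OF c]) (auto intro: continuous_intros)
    have ds: "continuous_on ({a<..<b} \<times> {0..1}) (\<lambda>x. d (snd x))"
      by (rule continuous_on_compose2[OF d]) (auto intro: continuous_intros)
    have ws: "continuous_on ({a<..<b} \<times> {0..1}) (\<lambda>x. w (snd x))"
      by (rule continuous_on_compose2[OF w]) (auto intro: continuous_intros)
    have "continuous_on ({a<..<b} \<times> {0..1}) (\<lambda>x. nderiv (Suc r) h (c (snd x) + d (snd x) * fst x))"
    proof (rule continuous_on_compose2[OF H1])
      show "continuous_on ({a<..<b} \<times> {0..1}) (\<lambda>x. c (snd x) + d (snd x) * fst x)"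
        by (intro continuous_on_add continuous_on_mult cs ds continuous_on_fst continuous_on_id)
      show "(\<lambda>x. c (snd x) + d (snd x) * fst x) ` ({a<..<b} \<times> {0..1}) \<subseteq> {a<..<b}"
        using inside by force
    qed
    then have "continuous_on ({a<..<b} \<times> {0..1}) (\<lambda>x. nderiv (Suc r) h (c (snd x) + d (snd x) * fst x) * (d (snd x) * w (snd x)))"
      by (intro continuous_on_mult ds ws)
    then show "continuous_on ({a<..<b} \<times> cbox 0 1) (\<lambda>(z, s). nderiv (Suc r) h (c s + d s * z) * (d s * w s))"
      by (simp add: case_prod_beta)
  qed (use z0 in auto)
  then show ?thesis
    by (simp add: at_within_open[OF z0])
qed

definition Phi :: "(real \<Rightarrow> real) \<Rightarrow> nat \<Rightarrow> nat \<Rightarrow> real \<Rightarrow> real \<Rightarrow> real" where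
  "Phi h p q x y = integral {0..1} (\<lambda>s. nderiv (Suc (p + q)) h ((1 - s) * x + s * y) * ((1 - s) ^ p * s ^ q))"

lemma conv_in:
  fixes x y s :: real
  assumes "x \<in> {a<..<b}" "y \<in> {a<..<b}" "s \<in> {0..1}"
  shows "(1 - s) * x + s * y \<in> {a<..<b}"
proof -
  have "(1 - s) * a + s * a \<le> (1 - s) * x + s * a" using assms by (intro add_right_mono mult_left_mono) auto
  moreover have "(1 - s) * x + s * a \<le> (1 - s) * x + s * y" using assms by (intro add_left_mono mult_left_mono) auto
  moreover have "(1 - s) * x + s * y \<le> (1 - s) * b + s * y" using assms by (intro add_right_mono mult_left_mono) auto
  moreover have "(1 - s) * b + s * y \<le> (1 - s) * b + s * b" using assms by (intro add_left_mono mult_left_mono) auto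
  moreover have "(1 - s) * a + s * a < (1 - s) * x + s * y"
  proof (cases "s = 1")
    case True then show ?thesis using assms by simp
  next
    case False
    then have "(1 - s) * a < (1 - s) * x" using assms by (intro mult_strict_left_mono) auto
    then show ?thesis using assms \<open>(1 - s) * x + s * a \<le> (1 - s) * x + s * y\<close> by linarith
  qed
  moreover have "(1 - s) * x + s * y < (1 - s) * b + s * b"
  proof (cases "s = 1")
    case True then show ?thesis using assms by simp
  next
    case False
    then have "(1 - s) * x < (1 - s) * b" using assms by (intro mult_strict_left_mono) auto
    then show ?thesis using assms \<open>(1 - s) * b + s * y \<le> (1 - s) * b + s * b\<close> by linarith
  qed
  ultimately show ?thesis by (simp add: algebra_simps)
qed

lemma Phi_dy:
  assumes C: "C_n_on n h {a<..<b}" and pq: "Suc (Suc (p + q)) \<le> n"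
    and x: "x \<in> {a<..<b}" and y: "y \<in> {a<..<b}"
  shows "((\<lambda>y. Phi h p q x y) has_real_derivative Phi h p (Suc q) x y) (at y)"
proof -
  have "((\<lambda>z. integral {0..1} (\<lambda>s. nderiv (Suc (p + q)) h ((\<lambda>s. (1 - s) * x) s + (\<lambda>s. s) s * z) * (\<lambda>s. (1 - s) ^ p * s ^ q) s)) has_real_derivative
          integral {0..1} (\<lambda>s. nderiv (Suc (Suc (p + q))) h ((\<lambda>s. (1 - s) * x) s + (\<lambda>s. s) s * y) * ((\<lambda>s. s) s * (\<lambda>s. (1 - s) ^ p * s ^ q) s))) (at y)"
  proof (rule param_deriv[OF C pq])
    show "\<And>s z. s \<in> {0..1} \<Longrightarrow> z \<in> {a<..<b} \<Longrightarrow> (1 - s) * x + s * z \<in> {a<..<b}"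
      using conv_in[OF x] by blast
  qed (use y in \<open>auto intro!: continuous_intros\<close>)
  then show ?thesis
    by (simp add: Phi_def mult_ac)
qed

lemma Phi_dx:
  assumes C: "C_n_on n h {a<..<b}" and pq: "Suc (Suc (p + q)) \<le> n"
    and x: "x \<in> {a<..<b}" and y: "y \<in> {a<..<b}"
  shows "((\<lambda>x. Phi h p q x y) has_real_derivative Phi h (Suc p) q x y) (at x)"
proof -
  have "((\<lambda>z. integral {0..1} (\<lambda>s. nderiv (Suc (p + q)) h ((\<lambda>s. s * y) s + (\<lambda>s. 1 - s) s * z) * (\<lambda>s. (1 - s) ^ p * s ^ q) s)) has_real_derivative
          integral {0..1} (\<lambda>s. nderiv (Suc (Suc (p + q))) h ((\<lambda>s. s * y) s + (\<lambda>s. 1 - s) s * x) * ((\<lambda>s. 1 - s) s * (\<lambda>s. (1 - s) ^ p * s ^ q) s))) (at x)"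
  proof (rule param_deriv[OF C pq])
    show "\<And>s z. s \<in> {0..1} \<Longrightarrow> z \<in> {a<..<b} \<Longrightarrow> s * y + (1 - s) * z \<in> {a<..<b}"
      using conv_in[OF _ y] by (metis add.commute)
  qed (use x in \<open>auto intro!: continuous_intros\<close>)
  then show ?thesis
    by (simp add: Phi_def mult_ac add.commute)
qed

lemma Phi_00:
  assumes C: "C_n_on n h {a<..<b}" and n: "1 \<le> n"
    and x: "a < x" and xy: "x < y" and y: "y < b"
  shows "Mdd h x y = Phi h 0 0 x y"
proof -
  have D: "(h has_real_derivative nderiv 1 h t) (at t)" if "t \<in> {a<..<b}" for t
    using Cn_deriv[OF C _ that, of 0] n by (simp add: nderiv_def)
  have c1: "continuous_on {x..y} (nderiv 1 h)"
    by (rule continuous_on_subset[OF Cn_cont[OF C n]]) (use x y in auto)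
  have "((\<lambda>s. (y - x) *\<^sub>R nderiv 1 h (x + s * (y - x))) has_integral integral {x + 0 * (y - x)..x + 1 * (y - x)} (nderiv 1 h)) {0..1}"
  proof (rule has_integral_substitution[OF _ _ _ c1])
    show "(\<lambda>s. x + s * (y - x)) ` {0..1} \<subseteq> {x..y}"
    proof -
      have "x + s * (y - x) \<in> {x..y}" if s: "0 \<le> s" "s \<le> 1" for s
      proof -
        have "s * (y - x) \<le> 1 * (y - x)" using s xy by (intro mult_right_mono) auto
        moreover have "0 \<le> s * (y - x)" using s xy by simp
        ultimately show ?thesis by auto
      qed
      then show ?thesis by auto
    qed
  qed (use xy in \<open>auto intro!: derivative_eq_intros\<close>)
  moreover have "(nderiv 1 h has_integral (h y - h x)) {x..y}"
  proof (rule fundamental_theorem_of_calculus)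
    fix t assume t: "t \<in> {x..y}"
    then have "(h has_real_derivative nderiv 1 h t) (at t within {x..y})"
      using D[of t] x y by (auto intro: has_field_derivative_at_within)
    then show "(h has_vector_derivative nderiv 1 h t) (at t within {x..y})"
      by (simp add: has_real_derivative_iff_has_vector_derivative)
  qed (use xy in auto)
  ultimately have "((\<lambda>s. (y - x) * nderiv 1 h ((1 - s) * x + s * y)) has_integral (h y - h x)) {0..1}"
    by (simp add: integral_unique algebra_simps)
  then have "integral {0..1} (\<lambda>s. (y - x) * nderiv 1 h ((1 - s) * x + s * y)) = h y - h x"
    by (rule integral_unique)
  then have "(y - x) * Phi h 0 0 x y = h y - h x"
    by (simp add: Phi_def)
  then show ?thesis using xy by (simp add: Mdd_def field_simps)
qed

theorem mainTheorem7:
  fixes h :: "real \<Rightarrow> real" and a b u v :: real and k j :: nat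
  assumes "k \<ge> 1"
    and "C_n_on (k + j) h {a<..<b}"
    and "a < u" and "u < v" and "v < b"
  shows "integral {u..v} (\<lambda>t. nderiv (k + j) h t * (t - u) ^ (k - 1) * (v - t) ^ j)
           = (v - u) ^ (k + j) * Mpartial h j (k - 1) u v"
proof -
  obtain k' where k: "k = Suc k'" using assms(1) by (cases k) auto
  note C = assms(2)
  have inner: "nderiv (k - 1) (\<lambda>y. Mdd h x y) v = Phi h 0 (k - 1) x v" if x: "a < x" "x < v" for x
  proof (rule nderiv_transfer[where S="{x<..<b}" and N="k - 1" and D="\<lambda>m z. Phi h 0 m x z"])
    fix m z assume m: "m < k - 1" and z: "z \<in> {x<..<b}"
    show "((\<lambda>z. Phi h 0 m x z) has_real_derivative Phi h 0 (Suc m) x z) (at z)"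
      by (rule Phi_dy[OF C]) (use m z x k in auto)
  next
    fix z assume z: "z \<in> {x<..<b}"
    show "Mdd h x z = Phi h 0 0 x z"
      by (rule Phi_00[OF C]) (use z x k in auto)
  qed (use x assms in auto)
  have outer: "nderiv j (\<lambda>x. nderiv (k - 1) (\<lambda>y. Mdd h x y) v) u = Phi h j (k - 1) u v"
  proof (rule nderiv_transfer[where S="{a<..<v}" and N="j" and D="\<lambda>m x. Phi h m (k - 1) x v"])
    fix m z assume m: "m < j" and z: "z \<in> {a<..<v}"
    show "((\<lambda>x. Phi h m (k - 1) x v) has_real_derivative Phi h (Suc m) (k - 1) z v) (at z)"
      by (rule Phi_dx[OF C]) (use m z k assms in auto)
  next
    fix z assume z: "z \<in> {a<..<v}"
    show "nderiv (k - 1) (\<lambda>y. Mdd h z y) v = Phi h 0 (k - 1) z v"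
      using inner z by auto
  qed (use assms in auto)
  define F where "F t = nderiv (k + j) h t * (t - u) ^ (k - 1) * (v - t) ^ j" for t
  have cF: "continuous_on {u..v} F"
    unfolding F_def
    by (intro continuous_intros continuous_on_subset[OF Cn_cont[OF C order.refl]]) (use assms in auto)
  have "((\<lambda>s. (v - u) *\<^sub>R F (u + s * (v - u))) has_integral integral {u + 0 * (v - u)..u + 1 * (v - u)} F) {0..1}"
  proof (rule has_integral_substitution[OF _ _ _ cF])
    show "(\<lambda>s. u + s * (v - u)) ` {0..1} \<subseteq> {u..v}"
    proof -
      have "u + s * (v - u) \<in> {u..v}" if s: "0 \<le> s" "s \<le> 1" for s
      proof -
        have "s * (v - u) \<le> 1 * (v - u)" using s assms by (intro mult_right_mono) auto
        moreover have "0 \<le> s * (v - u)" using s assms by simp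
        ultimately show ?thesis by auto
      qed
      then show ?thesis by auto
    qed
  qed (use assms in \<open>auto intro!: derivative_eq_intros\<close>)
  then have "((\<lambda>s. (v - u) * F (u + s * (v - u))) has_integral integral {u..v} F) {0..1}"
    by simp
  then have I: "integral {u..v} F = integral {0..1} (\<lambda>s. (v - u) * F (u + s * (v - u)))"
    by (rule integral_unique[symmetric])
  have pw: "(v - u) * F (u + s * (v - u)) =
      (v - u) ^ (k + j) * (nderiv (Suc (j + (k - 1))) h ((1 - s) * u + s * v) * ((1 - s) ^ j * s ^ (k - 1)))" for s
  proof -
    have e1: "u + s * (v - u) - u = s * (v - u)" by simp
    have e2: "v - (u + s * (v - u)) = (1 - s) * (v - u)" by (simp add: algebra_simps)
    have e3: "u + s * (v - u) = (1 - s) * u + s * v" by (simp add: algebra_simps)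
    have e4: "Suc (j + (k - 1)) = k + j" using k by simp
    show ?thesis
      unfolding F_def e1 e2 e4 e3[symmetric] using k
      by (simp add: power_mult_distrib power_add mult_ac)
  qed
  have "integral {u..v} F = (v - u) ^ (k + j) * Phi h j (k - 1) u v"
    unfolding I pw Phi_def by simp
  moreover have "F = (\<lambda>t. nderiv (k + j) h t * (t - u) ^ (k - 1) * (v - t) ^ j)"
    by (simp add: F_def fun_eq_iff)
  ultimately show ?thesis
    using outer by (simp add: Mpartial_def)
qed

end
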